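(* Let $q$ be a power of an odd prime and let $f(X) \in \mathbb{F}_{q^2}[X]$ be a planar polynomial all of whose coefficients belong to the subfield $\mathbb{F}_q$. Then the orthogonal polarity graph $G_f$ satisfies \[ \alpha(G_f) \geq \tfrac{1}{2} q^2 (q-1), \] where $\alpha$ denotes the independence number.
   Context: Let $Q$ be a power of an odd prime. A polynomial $f(X)\in\mathbb{F}_Q[X]$ is planar if for every $a\in\mathbb{F}_Q^*$ the map $x\mapsto f(x+a)-f(x)$ is a bijection of $\mathbb{F}_Q$. For planar $f$, the projective plane $\Pi_f$ has point set $\{(x,y):x,y\in\mathbb{F}_Q\}\cup\{(x):x\in\mathbb{F}_Q\}\cup\{(\infty)\}$ and lines $[a,b]=\{(x,f(x-a)+b):x\in\mathbb{F}_Q\}\cup\{(a)\}$, $[c]=\{(c,y):y\in\mathbb{F}_Q\}\cup\{(\infty)\}$, $[\infty]=\{(c):c\in\mathbb{F}_Q\}\cup\{(\infty)\}$ ($a,b,c\in\mathbb{F}_Q$), with incidence being containment. It has the polarity $\omega$ given by $(\infty)^\omega=[\infty]$, $[\infty]^\omega=(\infty)$, $(c)^\omega=[-c]$, $[c]^\omega=(-c)$, $(x,y)^\omega=[-x,-y]$, $[a,b]^\omega=(-a,-b)$. The graph $G_f$ has as vertices the points of $\Pi_f$, with two distinct points $p_1,p_2$ adjacent iff $p_1$ lies on the line $p_2^\omega$. (In particular distinct $(x_1,y_1),(x_2,y_2)$ are adjacent iff $f(x_1+x_2)=y_1+y_2$.) Here this is applied with $Q=q^2$. *)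

theory Defs
  imports "HOL-Computational_Algebra.Polynomial" "HOL-Computational_Algebra.Primes"
begin

definition planar :: "'a::{field,finite} poly \<Rightarrow> bool" where
  "planar f \<longleftrightarrow> (\<forall>a. a \<noteq> 0 \<longrightarrow> bij (\<lambda>x. poly f (x + a) - poly f x))"

datatype 'a pt = Aff 'a 'a | Dir 'a | PInf
datatype 'a ln = LAB 'a 'a | LV 'a | LInf

fun incident :: "'a::field poly \<Rightarrow> 'a pt \<Rightarrow> 'a ln \<Rightarrow> bool" where
  "incident f (Aff x y) (LAB a b) \<longleftrightarrow> y = poly f (x - a) + b"
| "incident f (Dir c) (LAB a b) \<longleftrightarrow> c = a"
| "incident f PInf (LAB a b) \<longleftrightarrow> False"
| "incident f (Aff x y) (LV c) \<longleftrightarrow> x = c"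
| "incident f (Dir c') (LV c) \<longleftrightarrow> False"
| "incident f PInf (LV c) \<longleftrightarrow> True"
| "incident f (Aff x y) LInf \<longleftrightarrow> False"
| "incident f (Dir c) LInf \<longleftrightarrow> True"
| "incident f PInf LInf \<longleftrightarrow> True"

fun polar :: "'a::field pt \<Rightarrow> 'a ln" where
  "polar PInf = LInf"
| "polar (Dir c) = LV (- c)"
| "polar (Aff x y) = LAB (- x) (- y)"

definition adj :: "'a::field poly \<Rightarrow> 'a pt \<Rightarrow> 'a pt \<Rightarrow> bool" where
  "adj f p1 p2 \<longleftrightarrow> p1 \<noteq> p2 \<and> incident f p1 (polar p2)"

definition indep_set :: "'a::field poly \<Rightarrow> 'a pt set \<Rightarrow> bool" where
  "indep_set f S \<longleftrightarrow> (\<forall>p1\<in>S. \<forall>p2\<in>S. \<not> adj f p1 p2)"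

definition independence_number :: "'a::field poly \<Rightarrow> nat" where
  "independence_number f = Max {card S | S. indep_set f S}"

end

theory Submission
  imports Defs
begin

lemma ff_pow_card:
  fixes x :: "'a :: {field,finite}"
  shows "x ^ card (UNIV :: 'a set) = x"
proof (cases "x = 0")
  case False
  have "x * (\<Prod>y\<in>UNIV-{0}. x * y) = x * x ^ (card (UNIV :: 'a set) - 1) * \<Prod>(UNIV-{0})"
    by (simp add: prod.distrib mult_ac)
  also have "x * x ^ (card (UNIV :: 'a set) - 1) = x ^ Suc (card (UNIV :: 'a set) - 1)"
    by (subst power_Suc) auto
  also have "Suc (card (UNIV :: 'a set) - 1) = card (UNIV :: 'a set)"
    using finite_UNIV_card_ge_0[where ?'a = 'a] by simp
  also have "(\<Prod>y\<in>UNIV-{0}. x * y) = (\<Prod>y\<in>UNIV-{0}. y)"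
    by (rule prod.reindex_bij_witness[of _ "\<lambda>y. y / x" "\<lambda>y. x * y"]) (use False in auto)
  finally show ?thesis
    by simp
qed (use finite_UNIV_card_ge_0[where ?'a = 'a] in auto)

lemma card_zero_char:
  "(of_nat (card (UNIV :: ('a::{field,finite}) set)) :: 'a) = 0"
proof -
  have "(\<Sum>x\<in>(UNIV::'a set). x + 1) = (\<Sum>x\<in>UNIV. x)"
    by (rule sum.reindex_bij_witness[of _ "\<lambda>y. y - 1" "\<lambda>y. y + 1"]) auto
  then show ?thesis by (simp add: sum.distrib)
qed

lemma finite_pt: "finite (UNIV :: ('a::finite) pt set)"
proof -
  have "(UNIV :: 'a pt set) = (case_prod Aff) ` UNIV \<union> range Dir \<union> {PInf}"
  proof (intro set_eqI iffI)
    fix z :: "'a pt" show "z \<in> (case_prod Aff) ` UNIV \<union> range Dir \<union> {PInf}"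
      by (cases z) auto
  qed auto
  then show ?thesis by (metis finite.emptyI finite.insertI finite_Un finite_imageI finite)
qed

theorem theorem1:
  fixes f :: "'a::{field,finite} poly" and q p k :: nat
  assumes "prime p" and "odd p" and "k > 0" and "q = p ^ k"
    and "card (UNIV :: 'a set) = q ^ 2"
    and "planar f"
    and "\<forall>i. coeff f i ^ q = coeff f i"
  shows "real (independence_number f) \<ge> 1/2 * real q ^ 2 * (real q - 1)"
proof -
  note pp = assms(1) and oddp = assms(2) and kpos = assms(3) and qdef = assms(4)
    and cardU = assms(5) and cf = assms(7)
  have cpos: "CHAR('a) > 0" by (rule finite_imp_CHAR_pos) simp
  have cprime: "prime CHAR('a)" using cpos by (rule prime_CHAR_semidom)
  have "CHAR('a) dvd card (UNIV :: 'a set)"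
    using card_zero_char[where 'a='a] of_nat_eq_0_iff_char_dvd[where 'a='a] by blast
  then have "CHAR('a) dvd p ^ (2*k)" using cardU qdef
    by (simp add: power_mult[symmetric] mult.commute)
  then have "CHAR('a) dvd p" using cprime prime_dvd_power by blast
  then have cp: "CHAR('a) = p" using cprime pp primes_dvd_imp_eq by blast
  have qk: "q = CHAR('a) ^ k" using cp qdef by simp
  have oddq: "odd q" using oddp qdef by simp
  have q3: "q \<ge> 3"
  proof -
    have "p \<ge> 2" using pp prime_ge_2_nat by blast
    then have "p \<ge> 3" using oddp by presburger
    moreover have "p \<le> q" using qdef kpos pp
      by (metis Suc_leI dvd_imp_le dvd_power power_not_zero prime_gt_0_nat
          gr_zeroI neq0_conv)
    ultimately show ?thesis by simp
  qed
  have frob: "(a + b) ^ q = a ^ q + b ^ q" for a b :: 'a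
    using freshmans_dream'[OF cprime qk] .
  have frobsum: "sum g A ^ q = sum (\<lambda>i. g i ^ q) A" for g :: "nat \<Rightarrow> 'a" and A
    using freshmans_dream_sum'[OF cprime qk] .
  have frobneg: "(- a) ^ q = - (a ^ q)" for a :: 'a using oddq by simp
  have frobdiff: "(a - b) ^ q = a ^ q - b ^ q" for a b :: 'a
    using frob[of "a - b" b] by (simp add: algebra_simps)
  have two: "(2::'a) \<noteq> 0"
  proof
    assume "(2::'a) = 0"
    then have "(of_nat 2 :: 'a) = 0" by simp
    then have "p dvd 2" using of_nat_eq_0_iff_char_dvd cp by metis
    then have "p \<le> 2" by (simp add: dvd_imp_le)
    then show False using q3 pp oddp prime_ge_2_nat[OF pp] by presburger
  qed
  have qq: "x ^ (q ^ 2) = x" for x :: 'a using ff_pow_card[of x] cardU by simp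
  have polyfrob: "poly f x ^ q = poly f (x ^ q)" for x :: 'a
  proof -
    have "poly f x ^ q = (\<Sum>i\<le>degree f. (coeff f i * x ^ i) ^ q)"
      by (simp add: poly_altdef frobsum)
    also have "\<dots> = (\<Sum>i\<le>degree f. coeff f i * (x ^ q) ^ i)"
      by (intro sum.cong refl) (simp add: power_mult_distrib cf power_mult[symmetric] mult.commute)
    finally show ?thesis by (simp add: poly_altdef)
  qed
  define \<psi> :: "'a \<Rightarrow> 'a" where "\<psi> y = y ^ q - y" for y
  have \<psi>add: "\<psi> (a + b) = \<psi> a + \<psi> b" for a b unfolding \<psi>_def by (simp add: frob)
  define K :: "'a set" where "K = {x. x ^ q = x}"
  define I :: "'a set" where "I = range \<psi>"
  have Kroot: "K = {x. poly ([:0, -1:] + monom 1 q) x = 0}"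
    unfolding K_def by (auto simp: poly_monom)
  have degK: "degree ([:0, -1:] + monom (1::'a) q) = q"
    using q3 by (subst degree_add_eq_right) (auto simp: degree_monom_eq)
  have cardK: "card K \<le> q"
    unfolding Kroot using card_poly_roots_bound[of "[:0, -1:] + monom (1::'a) q"] degK q3
    by fastforce
  have Isub: "I \<subseteq> {x. poly ([:0, 1:] + monom 1 q) x = 0}"
  proof
    fix z assume "z \<in> I"
    then obtain y where z: "z = \<psi> y" unfolding I_def by auto
    have "z ^ q = y ^ (q ^ 2) - y ^ q" unfolding z \<psi>_def
      by (simp add: frobdiff power_mult[symmetric] power2_eq_square)
    then have "z ^ q = y - y ^ q" using qq by simp
    then show "z \<in> {x. poly ([:0, 1:] + monom 1 q) x = 0}"
      by (simp add: poly_monom z \<psi>_def)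
  qed
  have degI: "degree ([:0, 1:] + monom (1::'a) q) = q"
    using q3 by (subst degree_add_eq_right) (auto simp: degree_monom_eq)
  have cardI: "card I \<le> q"
  proof -
    have "card I \<le> card {x. poly ([:0, 1:] + monom (1::'a) q) x = 0}"
      by (rule card_mono[OF _ Isub]) simp
    also have "\<dots> \<le> q" using card_poly_roots_bound[of "[:0, 1:] + monom (1::'a) q"] degI q3
      by fastforce
    finally show ?thesis .
  qed
  have fiber: "card (\<psi> -` {z}) = card K" if zI: "z \<in> I" for z
  proof -
    obtain y0 where z: "z = \<psi> y0" using zI unfolding I_def by auto
    have "\<psi> -` {z} = (\<lambda>k. y0 + k) ` K"
    proof (intro set_eqI iffI)
      fix y assume "y \<in> \<psi> -` {z}"
      then have "\<psi> (y - y0) = 0" using \<psi>add[of "y - y0" y0] z by simp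
      then have "y - y0 \<in> K" unfolding K_def \<psi>_def by simp
      then show "y \<in> (\<lambda>k. y0 + k) ` K" by (intro image_eqI[of _ _ "y - y0"]) auto
    next
      fix y assume "y \<in> (\<lambda>k. y0 + k) ` K"
      then obtain k where "k \<in> K" "y = y0 + k" by auto
      then show "y \<in> \<psi> -` {z}" using \<psi>add[of y0 k] z unfolding K_def \<psi>_def by auto
    qed
    then show ?thesis by (simp add: card_image)
  qed
  have "card (UNIV :: 'a set) = card (\<Union>z\<in>I. \<psi> -` {z})"
    unfolding I_def by (intro arg_cong[where f=card]) blast
  also have "\<dots> = (\<Sum>z\<in>I. card (\<psi> -` {z}))"
    by (rule card_UN_disjoint) auto
  also have "\<dots> = card I * card K" using fiber by simp
  finally have "q ^ 2 = card I * card K" using cardU by simp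
  then have "q * q \<le> q * card K" using cardI
    by (metis mult.commute mult_le_mono1 power2_eq_square)
  then have cardKq: "card K = q" using cardK q3 by simp
  obtain e :: "'a \<Rightarrow> nat" where einj: "inj e"
    using finite_imp_inj_to_nat_seg[of "UNIV :: 'a set"] by auto
  define Y where "Y = {y. \<psi> y \<noteq> 0 \<and> e (\<psi> y) < e (- \<psi> y)}"
  define Y' where "Y' = {y. \<psi> y \<noteq> 0 \<and> e (- \<psi> y) < e (\<psi> y)}"
  have \<psi>neg: "\<psi> (- y) = - \<psi> y" for y unfolding \<psi>_def by (simp add: frobneg)
  have Y'eq: "Y' = uminus ` Y"
  proof (intro set_eqI iffI)
    fix y assume "y \<in> Y'"
    then show "y \<in> uminus ` Y" unfolding Y_def Y'_def
      by (intro image_eqI[of _ _ "- y"]) (auto simp: \<psi>neg)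
  qed (auto simp: Y_def Y'_def \<psi>neg)
  have "card Y' = card Y" unfolding Y'eq by (simp add: card_image)
  have nz: "\<psi> y \<noteq> - \<psi> y" if "\<psi> y \<noteq> 0" for y
  proof
    assume "\<psi> y = - \<psi> y"
    then have "2 * \<psi> y = 0" by (simp add: algebra_simps mult_2)
    then show False using two that by simp
  qed
  have "UNIV - K = Y \<union> Y'"
  proof (intro set_eqI iffI)
    fix y assume "y \<in> UNIV - K"
    then have h: "\<psi> y \<noteq> 0" unfolding K_def \<psi>_def by auto
    then have "e (\<psi> y) \<noteq> e (- \<psi> y)" using nz einj by (metis injD)
    then show "y \<in> Y \<union> Y'" using h unfolding Y_def Y'_def by auto
  qed (auto simp: Y_def Y'_def K_def \<psi>_def)
  moreover have "Y \<inter> Y' = {}" unfolding Y_def Y'_def by auto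
  ultimately have "card (UNIV - K) = card Y + card Y'"
    by (simp add: card_Un_disjoint)
  then have cardY: "2 * card Y = q ^ 2 - q"
    using \<open>card Y' = card Y\<close> cardU cardKq by (simp add: card_Diff_subset)
  define S where "S = (\<lambda>(x, y). Aff x y) ` (K \<times> Y)"
  have cardS: "card S = q * card Y"
  proof -
    have "inj_on (\<lambda>(x, y). Aff x y) (K \<times> Y)" by (auto simp: inj_on_def)
    then show ?thesis unfolding S_def by (simp add: card_image card_cartesian_product cardKq)
  qed
  have indep: "indep_set f S"
    unfolding indep_set_def
  proof (intro ballI)
    fix p1 p2 assume "p1 \<in> S" "p2 \<in> S"
    then obtain x1 y1 x2 y2 where p: "p1 = Aff x1 y1" "p2 = Aff x2 y2"
      and m: "x1 \<in> K" "y1 \<in> Y" "x2 \<in> K" "y2 \<in> Y" unfolding S_def by auto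
    show "\<not> adj f p1 p2"
    proof
      assume "adj f p1 p2"
      then have e1: "y1 = poly f (x1 + x2) - y2" unfolding p adj_def by simp
      have "(x1 + x2) ^ q = x1 + x2" using m unfolding K_def by (simp add: frob)
      then have "poly f (x1 + x2) ^ q = poly f (x1 + x2)" by (simp add: polyfrob)
      then have "(y1 + y2) ^ q = y1 + y2" using e1 by simp
      then have "\<psi> y1 + \<psi> y2 = 0" unfolding \<psi>_def by (simp add: frob algebra_simps)
      then have "\<psi> y2 = - \<psi> y1" by (simp add: eq_neg_iff_add_eq_0 add.commute)
      then show False using m unfolding Y_def by auto
    qed
  qed
  have "card S \<le> independence_number f"
    unfolding independence_number_def
  proof (rule Max_ge)
    have "{card S |S. indep_set f S} \<subseteq> card ` Pow (UNIV :: 'a pt set)" by auto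
    moreover have "finite (Pow (UNIV :: 'a pt set))" by (rule finite_Pow_iff[THEN iffD2, OF finite_pt])
    ultimately show "finite {card S |S. indep_set f S}"
      by (rule finite_subset[OF _ finite_imageI])
  qed (use indep in auto)
  moreover have "real (card S) = 1/2 * real q ^ 2 * (real q - 1)"
  proof -
    have "q \<le> q ^ 2" using q3 by (simp add: power2_eq_square)
    then have "real (2 * card Y) = real q ^ 2 - real q" using cardY by (simp add: of_nat_diff)
    then have h2: "real (card Y) = (real q ^ 2 - real q) / 2" by simp
    have "real (card S) = real q * real (card Y)" using cardS by simp
    also have "\<dots> = 1/2 * real q ^ 2 * (real q - 1)" unfolding h2
      by (simp add: field_simps power2_eq_square)
    finally show ?thesis .
  qed
  ultimately show ?thesis by simp
qed

end
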